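(* Let $X=\{m_1,\dots,m_n\}$ be a Macaulay basis of $M$ and let $s_1,\dots,s_k$ be a generating set of $\operatorname{Syz}(\operatorname{lf}(m_1),\dots,\operatorname{lf}(m_n))$ consisting of homogeneous elements with respect to the $B$-grading of $R^{\oplus n}$ associated to $b_i=\deg m_i$. For each $j$ choose $h_j=(h_{j1},\dots,h_{jn})\in R^{\oplus n}$ with $\sum_is_{ji}m_i=\sum_ih_{ji}m_i$ such that $h_j=0$ if $\sum_is_{ji}m_i=0$, and otherwise every homogeneous component of $h_j$ has degree at most $\deg\big(\sum_is_{ji}m_i\big)$ (such $h_j$ arise from a reduction $\sum_is_{ji}m_i\to_X^*0$), and set $s'_j=s_j-h_j\in\operatorname{Syz}(m_1,\dots,m_n)$. Suppose $R^{\oplus n}$ carries a $B'$-grading refining this $B$-grading, and that $s_1,\dots,s_k$ is a Macaulay basis of $\operatorname{Syz}(\operatorname{lf}(m_1),\dots,\operatorname{lf}(m_n))$ with respect to the $B'$-grading. Then $s'_1,\dots,s'_k$ is a Macaulay basis of $\operatorname{Syz}(m_1,\dots,m_n)$ with respect to the $B'$-grading.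
   Context: Standing setup. $\mathbf{k}$ is a field. $(A,+,0)$ is a finitely generated cancellative commutative monoid with a well-ordered total order such that $0<a$ for $a\ne0$ and $a\le a'\Rightarrow a+c\le a'+c$. $R=\bigoplus_{a\in A}R_a$ is a commutative Noetherian $\mathbf{k}$-algebra with $R_aR_{a'}\subseteq R_{a+a'}$. $B$ (and likewise $B'$) is a well-ordered totally ordered set with an action $(a,b)\mapsto a\cdot b$ of $A$ with $0\cdot b=b$, $(a+a')\cdot b=a\cdot(a'\cdot b)$, monotone and cancellative in each argument. $N=\bigoplus_{b\in B}N_b$ is a Noetherian $R$-module with $R_aN_b\subseteq N_{a\cdot b}$; $M\subseteq N$ an $R$-submodule. For a nonzero element $m$ of a graded module, $\deg m$ is the largest degree of a nonzero homogeneous component and $\operatorname{lf}(m)$ is that component. A finite set of nonzero elements $\{m_1,\dots,m_n\}$ of a submodule $P$ of a graded module is a Macaulay basis of $P$ (w.r.t. that grading) if the submodule generated by $\{\operatorname{lf}(p):0\ne p\in P\}$ equals that generated by $\operatorname{lf}(m_1),\dots,\operatorname{lf}(m_n)$. Reduction: $W_b(X)=\operatorname{span}_{\mathbf{k}}\{r\operatorname{lf}(x): x\in X,\ r\in R\text{ homogeneous},\ r\operatorname{lf}(x)\in N_b\}$; $m\to_X m'$ iff $\{b: m_b\ne0,\ m_b\in W_b(X)\}$ is nonempty with maximum $b$ and $m'=m-\sum_jr_jx_j$ with $x_j\in X$, $r_j$ homogeneous, $r_j\operatorname{lf}(x_j)\in N_b$, $m_b=\sum_jr_j\operatorname{lf}(x_j)$;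 $\to_X^*$ reflexive–transitive closure. Syzygies: $\operatorname{Syz}(u_1,\dots,u_n)=\{(f_i)\in R^{\oplus n}:\sum_if_iu_i=0\}$. The $B$-grading of $R^{\oplus n}$ associated to $b_1,\dots,b_n$ is $(R^{\oplus n})_b=\bigoplus_i\bigoplus_{a\in A:\ a\cdot b_i=b}R_ae_i$. A $B'$-grading $R^{\oplus n}=\bigoplus_{b'\in B'}(R^{\oplus n})'_{b'}$ (with $R_a(R^{\oplus n})'_{b'}\subseteq(R^{\oplus n})'_{a\cdot b'}$) refines the $B$-grading if there is an order-preserving map $g:B'\to B$ with $g(a\cdot b')=a\cdot g(b')$ and $(R^{\oplus n})_b=\bigoplus_{b'\in g^{-1}(b)}(R^{\oplus n})'_{b'}$ for all $b\in B$. *)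

theory Defs
  imports Main "HOL.Modules" "HOL-Library.Function_Algebras"
begin

inductive_set gen_monoid :: "'a::comm_monoid_add set \<Rightarrow> 'a set" for G where
  gm_zero: "0 \<in> gen_monoid G"
| gm_gen: "g \<in> G \<Longrightarrow> g \<in> gen_monoid G"
| gm_add: "x \<in> gen_monoid G \<Longrightarrow> y \<in> gen_monoid G \<Longrightarrow> x + y \<in> gen_monoid G"

definition is_decomp :: "('i \<Rightarrow> 'm::ab_group_add set) \<Rightarrow> 'm \<Rightarrow> ('i \<Rightarrow> 'm) \<Rightarrow> bool" where
  "is_decomp G m f \<longleftrightarrow> finite {i. f i \<noteq> 0} \<and> (\<forall>i. f i \<in> G i) \<and> m = (\<Sum>i\<in>{i. f i \<noteq> 0}. f i)"

definition is_grading :: "'m::ab_group_add set \<Rightarrow> ('i \<Rightarrow> 'm set) \<Rightarrow> bool" where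
  "is_grading C G \<longleftrightarrow>
     (\<forall>i. 0 \<in> G i \<and> (\<forall>x\<in>G i. \<forall>y\<in>G i. x + y \<in> G i \<and> - x \<in> G i)) \<and>
     (\<forall>m. m \<in> C \<longleftrightarrow> (\<exists>f. is_decomp G m f)) \<and>
     (\<forall>m\<in>C. \<exists>!f. is_decomp G m f)"

definition hcomp :: "('i \<Rightarrow> 'm::ab_group_add set) \<Rightarrow> 'i \<Rightarrow> 'm \<Rightarrow> 'm" where
  "hcomp G i m = (THE f. is_decomp G m f) i"

definition hdeg :: "('i::linorder \<Rightarrow> 'm::ab_group_add set) \<Rightarrow> 'm \<Rightarrow> 'i" where
  "hdeg G m = Max {i. hcomp G i m \<noteq> 0}"

definition lf :: "('i::linorder \<Rightarrow> 'm::ab_group_add set) \<Rightarrow> 'm \<Rightarrow> 'm" where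
  "lf G m = hcomp G (hdeg G m) m"

definition homogeneous :: "('i \<Rightarrow> 'm set) \<Rightarrow> 'm \<Rightarrow> bool" where
  "homogeneous G m \<longleftrightarrow> (\<exists>i. m \<in> G i)"

definition macaulay_basis ::
  "('r::comm_ring_1 \<Rightarrow> 'm::ab_group_add \<Rightarrow> 'm) \<Rightarrow> ('i::linorder \<Rightarrow> 'm set) \<Rightarrow> 'm set \<Rightarrow> 'm set \<Rightarrow> bool" where
  "macaulay_basis scale G P X \<longleftrightarrow> finite X \<and> X \<subseteq> P \<and> 0 \<notin> X \<and>
     module.span scale {lf G p | p. p \<in> P \<and> p \<noteq> 0} = module.span scale (lf G ` X)"

definition noetherian_module :: "('r::comm_ring_1 \<Rightarrow> 'm::ab_group_add \<Rightarrow> 'm) \<Rightarrow> bool" where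
  "noetherian_module scale \<longleftrightarrow>
     (\<forall>S. module.subspace scale S \<longrightarrow> (\<exists>F. finite F \<and> module.span scale F = S))"

(* The free module R^n, represented as functions nat => R vanishing outside {..<n} *)
definition free_carrier :: "nat \<Rightarrow> (nat \<Rightarrow> 'r::zero) set" where
  "free_carrier n = {f. \<forall>i\<ge>n. f i = 0}"

definition vscale :: "'r::comm_ring_1 \<Rightarrow> (nat \<Rightarrow> 'r) \<Rightarrow> (nat \<Rightarrow> 'r)" where
  "vscale r f = (\<lambda>i. r * f i)"

definition Syz :: "('r::comm_ring_1 \<Rightarrow> 'm::ab_group_add \<Rightarrow> 'm) \<Rightarrow> nat \<Rightarrow> (nat \<Rightarrow> 'm) \<Rightarrow> (nat \<Rightarrow> 'r) set" where
  "Syz scale n u = {f \<in> free_carrier n. (\<Sum>i<n. scale (f i) (u i)) = 0}"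

(* B-grading of R^n associated to b_1..b_n:
   (R^n)_b = sum_i sum_{a. a.b_i = b} R_a e_i  (at most one such a, by cancellativity) *)
definition assoc_grading ::
  "('a \<Rightarrow> 'r::comm_ring_1 set) \<Rightarrow> ('a \<Rightarrow> 'b \<Rightarrow> 'b) \<Rightarrow> (nat \<Rightarrow> 'b) \<Rightarrow> nat \<Rightarrow> 'b \<Rightarrow> (nat \<Rightarrow> 'r) set" where
  "assoc_grading GR act bs n b =
     {f \<in> free_carrier n. \<forall>i<n. f i = 0 \<or> (\<exists>a. act a (bs i) = b \<and> f i \<in> GR a)}"

end

theory Submission
  imports Defs
begin

lemma fun_sum_apply: "(sum f A) x = (\<Sum>a\<in>A. f a x)" for f :: "'c \<Rightarrow> 'd \<Rightarrow> 'e::comm_monoid_add"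
  by (induct A rule: infinite_finite_induct) auto

lemma decomp_super:
  assumes "finite S" "\<forall>i. f i \<in> G i" "{i. f i \<noteq> 0} \<subseteq> S" "m = sum f S"
  shows "is_decomp G m f"
proof -
  have fin: "finite {i. f i \<noteq> 0}" using assms finite_subset by blast
  have "sum f S = sum f {i. f i \<noteq> 0}"
    by (rule sum.mono_neutral_right) (use assms in auto)
  then show ?thesis using assms fin unfolding is_decomp_def by auto
qed

lemma decomp_sum_super:
  assumes "is_decomp G m f" "finite S" "{i. f i \<noteq> 0} \<subseteq> S"
  shows "m = sum f S"
proof -
  have "sum f S = sum f {i. f i \<noteq> 0}"
    by (rule sum.mono_neutral_right) (use assms in auto)
  then show ?thesis using assms unfolding is_decomp_def by auto
qed

lemma gr_closed:
  assumes "is_grading C G"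
  shows "0 \<in> G i" "x \<in> G i \<Longrightarrow> y \<in> G i \<Longrightarrow> x + y \<in> G i" "x \<in> G i \<Longrightarrow> - x \<in> G i"
  using assms unfolding is_grading_def by auto

lemma gr_closed_diff:
  assumes "is_grading C G" "x \<in> G i" "y \<in> G i" shows "x - y \<in> G i"
  using gr_closed[OF assms(1)] assms(2,3) by (metis diff_conv_add_uminus)

lemma gr_closed_sum:
  assumes "is_grading C G" "\<forall>x\<in>I. u x \<in> G i" shows "sum u I \<in> G i"
  using assms(2)
  by (induct I rule: infinite_finite_induct) (auto intro: gr_closed[OF assms(1)])

lemma decomp_single:
  assumes "is_grading C G" "x \<in> G i"
  shows "is_decomp G x (\<lambda>j. if j = i then x else 0)"
  by (rule decomp_super[of "{i}"]) (use assms gr_closed[OF assms(1)] in auto)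

lemma gr_in_C: assumes "is_grading C G" shows "m \<in> C \<longleftrightarrow> (\<exists>f. is_decomp G m f)"
  using assms unfolding is_grading_def by auto

lemma gr_sub: assumes "is_grading C G" "x \<in> G i" shows "x \<in> C"
  using gr_in_C[OF assms(1)] decomp_single[OF assms] by blast

lemma gr_hcomp:
  assumes "is_grading C G" "is_decomp G m f" shows "hcomp G i m = f i"
proof -
  have "m \<in> C" using gr_in_C[OF assms(1)] assms(2) by blast
  then have "\<exists>!f. is_decomp G m f" using assms(1) unfolding is_grading_def by auto
  then have "(THE f. is_decomp G m f) = f" using assms(2) by (metis the1_equality)
  then show ?thesis unfolding hcomp_def by simp
qed

lemma gr_decomp:
  assumes "is_grading C G" "m \<in> C" shows "is_decomp G m (\<lambda>i. hcomp G i m)"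
proof -
  obtain f where f: "is_decomp G m f" using gr_in_C[OF assms(1)] assms(2) by blast
  have "(\<lambda>i. hcomp G i m) = f" using gr_hcomp[OF assms(1) f] by auto
  then show ?thesis using f by simp
qed

lemma gr_hcomp_in: assumes "is_grading C G" "m \<in> C" shows "hcomp G i m \<in> G i"
  using gr_decomp[OF assms] unfolding is_decomp_def by auto

lemma gr_supp_finite: assumes "is_grading C G" "m \<in> C" shows "finite {i. hcomp G i m \<noteq> 0}"
  using gr_decomp[OF assms] unfolding is_decomp_def by auto

lemma gr_expand:
  assumes "is_grading C G" "m \<in> C" "finite S" "{i. hcomp G i m \<noteq> 0} \<subseteq> S"
  shows "m = (\<Sum>i\<in>S. hcomp G i m)"
  using decomp_sum_super[OF gr_decomp[OF assms(1,2)] assms(3,4)] .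

lemma gr_homog:
  assumes "is_grading C G" "x \<in> G j" shows "hcomp G i x = (if i = j then x else 0)"
  using gr_hcomp[OF assms(1) decomp_single[OF assms]] .

lemma decomp_add:
  assumes "is_grading C G" "is_decomp G a f" "is_decomp G b f'"
  shows "is_decomp G (a + b) (\<lambda>i. f i + f' i)"
proof -
  let ?S = "{i. f i \<noteq> 0} \<union> {i. f' i \<noteq> 0}"
  have fin: "finite ?S" using assms unfolding is_decomp_def by auto
  have "a = sum f ?S" by (rule decomp_sum_super[OF assms(2) fin]) auto
  moreover have "b = sum f' ?S" by (rule decomp_sum_super[OF assms(3) fin]) auto
  ultimately show ?thesis
    by (intro decomp_super[OF fin]) (use assms gr_closed[OF assms(1)] in \<open>auto simp: is_decomp_def sum.distrib\<close>)
qed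

lemma decomp_neg:
  assumes "is_grading C G" "is_decomp G a f"
  shows "is_decomp G (- a) (\<lambda>i. - f i)"
  using assms gr_closed[OF assms(1)] unfolding is_decomp_def by (auto simp: sum_negf)

lemma gr_add:
  assumes "is_grading C G" "a \<in> C" "b \<in> C"
  shows "a + b \<in> C" "hcomp G i (a + b) = hcomp G i a + hcomp G i b"
proof -
  have d: "is_decomp G (a + b) (\<lambda>i. hcomp G i a + hcomp G i b)"
    by (rule decomp_add[OF assms(1) gr_decomp[OF assms(1,2)] gr_decomp[OF assms(1,3)]])
  then show "a + b \<in> C" using gr_in_C[OF assms(1)] by blast
  show "hcomp G i (a + b) = hcomp G i a + hcomp G i b" using gr_hcomp[OF assms(1) d] .
qed

lemma gr_neg:
  assumes "is_grading C G" "a \<in> C"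
  shows "- a \<in> C" "hcomp G i (- a) = - hcomp G i a"
proof -
  have d: "is_decomp G (- a) (\<lambda>i. - hcomp G i a)"
    by (rule decomp_neg[OF assms(1) gr_decomp[OF assms(1,2)]])
  then show "- a \<in> C" using gr_in_C[OF assms(1)] by blast
  show "hcomp G i (- a) = - hcomp G i a" using gr_hcomp[OF assms(1) d] .
qed

lemma gr_diff:
  assumes "is_grading C G" "a \<in> C" "b \<in> C"
  shows "a - b \<in> C" "hcomp G i (a - b) = hcomp G i a - hcomp G i b"
  unfolding diff_conv_add_uminus
  using gr_add[OF assms(1,2) gr_neg(1)[OF assms(1,3)]] gr_neg(2)[OF assms(1,3)]
  by (simp_all only:)

lemma gr_zero:
  assumes "is_grading C G" shows "0 \<in> C" "hcomp G i 0 = 0"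
proof -
  have d: "is_decomp G 0 (\<lambda>i. 0)" using gr_closed[OF assms] unfolding is_decomp_def by auto
  then show "0 \<in> C" using gr_in_C[OF assms] by blast
  show "hcomp G i 0 = 0" using gr_hcomp[OF assms d] by simp
qed

lemma gr_sum:
  assumes "is_grading C G" "\<forall>x\<in>I. u x \<in> C"
  shows "sum u I \<in> C \<and> hcomp G i (sum u I) = (\<Sum>x\<in>I. hcomp G i (u x))"
  using assms(2)
  by (induct I rule: infinite_finite_induct) (auto simp: gr_zero[OF assms(1)] gr_add[OF assms(1)])

lemma gr_ext:
  assumes "is_grading C G" "a \<in> C" "b \<in> C" "\<forall>i. hcomp G i a = hcomp G i b" shows "a = b"
proof -
  have "a - b = 0"
    using gr_expand[OF assms(1) gr_diff(1)[OF assms(1-3)] finite.emptyI] gr_diff(2)[OF assms(1-3)] assms(4)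
    by auto
  then show ?thesis by simp
qed

lemma gr_nonzero:
  assumes "is_grading C G" "m \<in> C" "m \<noteq> 0" shows "{i. hcomp G i m \<noteq> 0} \<noteq> {}"
  using gr_expand[OF assms(1,2) finite.emptyI] assms(3) by auto

lemma gr_hdeg:
  fixes G :: "'i::linorder \<Rightarrow> 'm::ab_group_add set"
  assumes "is_grading C G" "m \<in> C" "m \<noteq> 0"
  shows "hcomp G (hdeg G m) m \<noteq> 0" "hcomp G i m \<noteq> 0 \<Longrightarrow> i \<le> hdeg G m"
proof -
  have f: "finite {i. hcomp G i m \<noteq> 0}" by (rule gr_supp_finite[OF assms(1,2)])
  have ne: "{i. hcomp G i m \<noteq> 0} \<noteq> {}" by (rule gr_nonzero[OF assms])
  show "hcomp G (hdeg G m) m \<noteq> 0" using Max_in[OF f ne] unfolding hdeg_def by auto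
  show "hcomp G i m \<noteq> 0 \<Longrightarrow> i \<le> hdeg G m" using Max_ge[OF f] unfolding hdeg_def by auto
qed

lemma gr_hdeg_eq:
  fixes G :: "'i::linorder \<Rightarrow> 'm::ab_group_add set"
  assumes "is_grading C G" "m \<in> C" "hcomp G d m \<noteq> 0" "\<forall>i. hcomp G i m \<noteq> 0 \<longrightarrow> i \<le> d"
  shows "hdeg G m = d"
  unfolding hdeg_def using gr_supp_finite[OF assms(1,2)] assms(3,4)
  by (intro Max_eqI) auto


lemma refine_comp:
  assumes G': "is_grading C G'"
    and ref: "\<forall>b. BG b = {x \<in> C. \<forall>b'. hcomp G' b' x \<noteq> 0 \<longrightarrow> g b' = b}"
    and f: "is_decomp BG m f"
  shows "hcomp G' b' m = hcomp G' b' (f (g b'))"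
proof -
  let ?S = "{b. f b \<noteq> 0}"
  have fin: "finite ?S" and fin_BG: "\<forall>b. f b \<in> BG b" and meq: "m = sum f ?S"
    using f unfolding is_decomp_def by auto
  have fC: "\<forall>b. f b \<in> C" using fin_BG ref by auto
  have "hcomp G' b' m = (\<Sum>b\<in>?S. hcomp G' b' (f b))"
    using gr_sum[OF G', of ?S f] fC meq by auto
  also have "\<dots> = (\<Sum>b\<in>?S. if b = g b' then hcomp G' b' (f (g b')) else 0)"
  proof (rule sum.cong)
    fix b assume "b \<in> ?S"
    show "hcomp G' b' (f b) = (if b = g b' then hcomp G' b' (f (g b')) else 0)"
      using fin_BG[rule_format, of b] ref by auto
  qed simp
  also have "\<dots> = hcomp G' b' (f (g b'))"
    using gr_zero(2)[OF G'] by (cases "f (g b') = 0") (simp_all add: sum.delta[OF fin])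
  finally show ?thesis .
qed

lemma refine_grading:
  assumes G': "is_grading C G'"
    and ref: "\<forall>b. BG b = {x \<in> C. \<forall>b'. hcomp G' b' x \<noteq> 0 \<longrightarrow> g b' = b}"
  shows "is_grading C BG"
proof -
  have BGC: "x \<in> BG b \<Longrightarrow> x \<in> C" for x b using ref by auto
  have cl: "\<forall>b. 0 \<in> BG b \<and> (\<forall>x\<in>BG b. \<forall>y\<in>BG b. x + y \<in> BG b \<and> - x \<in> BG b)"
  proof (intro allI conjI ballI)
    fix b
    show "0 \<in> BG b" using ref gr_zero[OF G'] by auto
    fix x y assume x: "x \<in> BG b" and y: "y \<in> BG b"
    have xC: "x \<in> C" and yC: "y \<in> C" using x y BGC by auto
    have "hcomp G' b' (x + y) \<noteq> 0 \<Longrightarrow> g b' = b" for b'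
      using x y ref gr_add(2)[OF G' xC yC, of b'] by (cases "hcomp G' b' x = 0") auto
    then show "x + y \<in> BG b" using ref gr_add(1)[OF G' xC yC] by auto
    show "- x \<in> BG b" using x ref gr_neg[OF G' xC] by auto
  qed
  have ex: "(m \<in> C) = (\<exists>f. is_decomp BG m f)" for m
  proof
    assume f: "\<exists>f. is_decomp BG m f"
    then obtain f where f: "is_decomp BG m f" by blast
    then have "m = sum f {b. f b \<noteq> 0}" "\<forall>b. f b \<in> C"
      unfolding is_decomp_def using BGC by auto
    then show "m \<in> C" using gr_sum[OF G', of "{b. f b \<noteq> 0}" f] by auto
  next
    assume mC: "m \<in> C"
    define S where "S = {b'. hcomp G' b' m \<noteq> 0}"
    have finS: "finite S" unfolding S_def by (rule gr_supp_finite[OF G' mC])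
    define f where "f b = (\<Sum>b'\<in>{b'\<in>S. g b' = b}. hcomp G' b' m)" for b
    have hC: "hcomp G' b' m \<in> C" for b' using gr_sub[OF G' gr_hcomp_in[OF G' mC]] .
    have fBG: "f b \<in> BG b" for b
    proof -
      have fC: "f b \<in> C" and hc: "hcomp G' c (f b) = (\<Sum>b'\<in>{b'\<in>S. g b' = b}. hcomp G' c (hcomp G' b' m))" for c
        using gr_sum[OF G', of "{b'\<in>S. g b' = b}" "\<lambda>b'. hcomp G' b' m"] hC unfolding f_def by auto
      have "hcomp G' c (f b) \<noteq> 0 \<Longrightarrow> g c = b" for c
      proof -
        assume ne: "hcomp G' c (f b) \<noteq> 0"
        have "hcomp G' c (f b) = (\<Sum>b'\<in>{b'\<in>S. g b' = b}. if c = b' then hcomp G' b' m else 0)"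
          unfolding hc using gr_homog[OF G' gr_hcomp_in[OF G' mC]] by (intro sum.cong) auto
        also have "\<dots> = (if c \<in> {b'\<in>S. g b' = b} then hcomp G' c m else 0)"
          using finS by (simp add: sum.delta)
        finally show "g c = b" using ne by (auto split: if_splits)
      qed
      then show ?thesis using fC ref by auto
    qed
    have "is_decomp BG m f"
    proof (rule decomp_super[of "g ` S"])
      show "finite (g ` S)" using finS by simp
      show "\<forall>i. f i \<in> BG i" using fBG by auto
      show "{i. f i \<noteq> 0} \<subseteq> g ` S"
      proof
        fix b assume bb: "b \<in> {i. f i \<noteq> 0}"
        have "{b'\<in>S. g b' = b} \<noteq> {}"
        proof
          assume e: "{b'\<in>S. g b' = b} = {}"
          have "f b = 0" unfolding f_def e by simp
          then show False using bb by simp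
        qed
        then show "b \<in> g ` S" by auto
      qed
      have "m = (\<Sum>b'\<in>S. hcomp G' b' m)" using gr_expand[OF G' mC finS] S_def by auto
      also have "\<dots> = sum f (g ` S)" unfolding f_def by (rule sum.image_gen[OF finS])
      finally show "m = sum f (g ` S)" .
    qed
    then show "\<exists>f. is_decomp BG m f" by blast
  qed
  have un: "\<exists>!f. is_decomp BG m f" if mC: "m \<in> C" for m
  proof -
    obtain f where f: "is_decomp BG m f" using ex mC by blast
    moreover have "f2 = f" if f2: "is_decomp BG m f2" for f2
    proof
      fix b
      have fb: "f b \<in> BG b" "f2 b \<in> BG b" using f f2 unfolding is_decomp_def by auto
      show "f2 b = f b"
      proof (rule gr_ext[OF G' BGC[OF fb(2)] BGC[OF fb(1)]], intro allI)
        fix b'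
        show "hcomp G' b' (f2 b) = hcomp G' b' (f b)"
        proof (cases "g b' = b")
          case True
          then show ?thesis using refine_comp[OF G' ref f, of b'] refine_comp[OF G' ref f2, of b'] by simp
        next
          case False
          have A: "\<forall>b'. hcomp G' b' (f b) \<noteq> 0 \<longrightarrow> g b' = b" using fb(1) ref by auto
          have B: "\<forall>b'. hcomp G' b' (f2 b) \<noteq> 0 \<longrightarrow> g b' = b" using fb(2) ref by auto
          show ?thesis using A B False by metis
        qed
      qed
    qed
    ultimately show ?thesis by blast
  qed
  show ?thesis unfolding is_grading_def using cl ex un by blast
qed

lemma pred_sum:
  assumes "is_grading UNIV G" "\<forall>x\<in>I. \<forall>c. hcomp G c (u x) \<noteq> 0 \<longrightarrow> P c"
  shows "\<forall>c. hcomp G c (sum u I) \<noteq> 0 \<longrightarrow> P c"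
proof (intro allI impI)
  fix c assume ne: "hcomp G c (sum u I) \<noteq> 0"
  have "hcomp G c (sum u I) = (\<Sum>x\<in>I. hcomp G c (u x))" using gr_sum[OF assms(1)] by auto
  then obtain x where "x \<in> I" "hcomp G c (u x) \<noteq> 0" using ne sum.neutral by (metis (mono_tags, lifting))
  then show "P c" using assms(2) by auto
qed

lemma pred_add:
  assumes "is_grading UNIV G" "\<forall>c. hcomp G c x \<noteq> 0 \<longrightarrow> P c" "\<forall>c. hcomp G c y \<noteq> 0 \<longrightarrow> P c"
  shows "\<forall>c. hcomp G c (x + y) \<noteq> 0 \<longrightarrow> P c"
proof (intro allI impI)
  fix c assume "hcomp G c (x + y) \<noteq> 0"
  then show "P c" using assms gr_add(2)[OF assms(1), of x y c] by (cases "hcomp G c x = 0") auto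
qed

lemma pred_homog:
  assumes "is_grading UNIV G" "x \<in> G d" "P d"
  shows "\<forall>c. hcomp G c x \<noteq> 0 \<longrightarrow> P c"
  using assms gr_homog[OF assms(1,2)] by auto


lemma smult_LT:
  fixes GN :: "'b::linorder \<Rightarrow> 'n::ab_group_add set"
  assumes NG: "is_grading UNIV GN"
    and N_mult: "\<forall>a b r x. r \<in> GR a \<longrightarrow> x \<in> GN b \<longrightarrow> smult r x \<in> GN (act a b)"
    and Nm: "module smult"
    and act_mono2: "\<forall>a b b'. b \<le> b' \<longrightarrow> act a b \<le> act a b'"
    and act_canc2: "\<forall>a b b'. act a b = act a b' \<longrightarrow> b = b'"
    and r: "r \<in> GR a" and z: "\<forall>c. hcomp GN c z \<noteq> 0 \<longrightarrow> c < e"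
  shows "\<forall>c. hcomp GN c (smult r z) \<noteq> 0 \<longrightarrow> c < act a e"
proof -
  define S where "S = {c. hcomp GN c z \<noteq> 0}"
  have finS: "finite S" unfolding S_def using gr_supp_finite[OF NG] by auto
  have "z = (\<Sum>c\<in>S. hcomp GN c z)" using gr_expand[OF NG _ finS] S_def by auto
  then have eqz: "smult r z = (\<Sum>c\<in>S. smult r (hcomp GN c z))"
    using module.scale_sum_right[OF Nm, of r "\<lambda>c. hcomp GN c z" S] by simp
  have all: "\<forall>x\<in>S. \<forall>c. hcomp GN c (smult r (hcomp GN x z)) \<noteq> 0 \<longrightarrow> c < act a e"
  proof
    fix x assume xS: "x \<in> S"
    have "x < e" using xS z S_def by auto
    then have lt: "act a x < act a e"
    proof -
      assume xe: "x < e"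
      have "act a x \<le> act a e" using act_mono2 xe by simp
      moreover have "act a x \<noteq> act a e" using act_canc2 xe by fastforce
      ultimately show ?thesis by simp
    qed
    have "smult r (hcomp GN x z) \<in> GN (act a x)"
      using N_mult r gr_hcomp_in[OF NG] by blast
    then show "\<forall>c. hcomp GN c (smult r (hcomp GN x z)) \<noteq> 0 \<longrightarrow> c < act a e"
      using pred_homog[OF NG _, of _ _ "\<lambda>c. c < act a e", OF _ lt] by blast
  qed
  show ?thesis unfolding eqz by (rule pred_sum[OF NG all])
qed

theorem mainTheorem15:
  fixes of_k :: "'k::field \<Rightarrow> 'r::comm_ring_1"
    and GR :: "'a::{cancel_comm_monoid_add, wellorder} \<Rightarrow> 'r set"
    and act :: "'a \<Rightarrow> 'b::wellorder \<Rightarrow> 'b"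
    and act' :: "'a \<Rightarrow> 'b'::wellorder \<Rightarrow> 'b'"
    and smult :: "'r \<Rightarrow> 'n::ab_group_add \<Rightarrow> 'n"
    and GN :: "'b \<Rightarrow> 'n set"
    and M :: "'n set"
    and n k :: nat
    and m :: "nat \<Rightarrow> 'n"
    and s h :: "nat \<Rightarrow> nat \<Rightarrow> 'r"
    and G' :: "'b' \<Rightarrow> (nat \<Rightarrow> 'r) set"
    and g :: "'b' \<Rightarrow> 'b"
  \<comment> \<open>the monoid A\<close>
  assumes A_fg: "\<exists>S. finite S \<and> (\<forall>a::'a. a \<in> gen_monoid S)"
    and A_pos: "\<forall>a::'a. a \<noteq> 0 \<longrightarrow> 0 < a"
    and A_mono: "\<forall>a a' c::'a. a \<le> a' \<longrightarrow> a + c \<le> a' + c"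
  \<comment> \<open>the A-graded commutative Noetherian k-algebra R\<close>
    and k_hom: "of_k 1 = 1" "\<forall>x y. of_k (x + y) = of_k x + of_k y" "\<forall>x y. of_k (x * y) = of_k x * of_k y"
    and R_grading: "is_grading (UNIV :: 'r set) GR"
    and R_mult: "\<forall>a a' x y. x \<in> GR a \<longrightarrow> y \<in> GR a' \<longrightarrow> x * y \<in> GR (a + a')"
    and R_kspace: "\<forall>a c x. x \<in> GR a \<longrightarrow> of_k c * x \<in> GR a"
    and R_noeth: "noetherian_module ((*) :: 'r \<Rightarrow> 'r \<Rightarrow> 'r)"
  \<comment> \<open>the action of A on B\<close>
    and act_0: "\<forall>b. act 0 b = b"
    and act_add: "\<forall>a a' b. act (a + a') b = act a (act a' b)"
    and act_mono1: "\<forall>a a' b. a \<le> a' \<longrightarrow> act a b \<le> act a' b"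
    and act_mono2: "\<forall>a b b'. b \<le> b' \<longrightarrow> act a b \<le> act a b'"
    and act_canc1: "\<forall>a a' b. act a b = act a' b \<longrightarrow> a = a'"
    and act_canc2: "\<forall>a b b'. act a b = act a b' \<longrightarrow> b = b'"
  \<comment> \<open>the action of A on B'\<close>
    and act'_0: "\<forall>b. act' 0 b = b"
    and act'_add: "\<forall>a a' b. act' (a + a') b = act' a (act' a' b)"
    and act'_mono1: "\<forall>a a' b. a \<le> a' \<longrightarrow> act' a b \<le> act' a' b"
    and act'_mono2: "\<forall>a b b'. b \<le> b' \<longrightarrow> act' a b \<le> act' a b'"
    and act'_canc1: "\<forall>a a' b. act' a b = act' a' b \<longrightarrow> a = a'"
    and act'_canc2: "\<forall>a b b'. act' a b = act' a b' \<longrightarrow> b = b'"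
  \<comment> \<open>the B-graded Noetherian R-module N and its submodule M\<close>
    and N_module: "module smult"
    and N_grading: "is_grading (UNIV :: 'n set) GN"
    and N_mult: "\<forall>a b r x. r \<in> GR a \<longrightarrow> x \<in> GN b \<longrightarrow> smult r x \<in> GN (act a b)"
    and N_noeth: "noetherian_module smult"
    and M_sub: "module.subspace smult M"
  \<comment> \<open>X = {m_1..m_n} a Macaulay basis of M\<close>
    and X_mac: "macaulay_basis smult GN M (m ` {..<n})"
  \<comment> \<open>s_1..s_k homogeneous generators of Syz(lf m_1, .., lf m_n)\<close>
    and s_syz: "\<forall>j<k. s j \<in> Syz smult n (\<lambda>i. lf GN (m i))"
    and s_hom: "\<forall>j<k. homogeneous (assoc_grading GR act (\<lambda>i. hdeg GN (m i)) n) (s j)"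
    and s_gen: "module.span vscale (s ` {..<k}) = Syz smult n (\<lambda>i. lf GN (m i))"
  \<comment> \<open>the corrections h_j\<close>
    and h_carrier: "\<forall>j<k. h j \<in> free_carrier n"
    and h_eq: "\<forall>j<k. (\<Sum>i<n. smult (s j i) (m i)) = (\<Sum>i<n. smult (h j i) (m i))"
    and h_zero: "\<forall>j<k. (\<Sum>i<n. smult (s j i) (m i)) = 0 \<longrightarrow> h j = 0"
    and h_deg: "\<forall>j<k. (\<Sum>i<n. smult (s j i) (m i)) \<noteq> 0 \<longrightarrow>
        (\<forall>b. hcomp (assoc_grading GR act (\<lambda>i. hdeg GN (m i)) n) b (h j) \<noteq> 0 \<longrightarrow>
             b \<le> hdeg GN (\<Sum>i<n. smult (s j i) (m i)))"
  \<comment> \<open>a B'-grading of R^n refining the B-grading\<close>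
    and G'_grading: "is_grading (free_carrier n) G'"
    and G'_mult: "\<forall>a b' r x. r \<in> GR a \<longrightarrow> x \<in> G' b' \<longrightarrow> vscale r x \<in> G' (act' a b')"
    and g_mono: "mono g"
    and g_act: "\<forall>a b'. g (act' a b') = act a (g b')"
    and g_refines: "\<forall>b. assoc_grading GR act (\<lambda>i. hdeg GN (m i)) n b =
        {x \<in> free_carrier n. \<forall>b'. hcomp G' b' x \<noteq> 0 \<longrightarrow> g b' = b}"
  \<comment> \<open>s_1..s_k a Macaulay basis of Syz(lf m_i) w.r.t. the B'-grading\<close>
    and s_mac: "macaulay_basis vscale G' (Syz smult n (\<lambda>i. lf GN (m i))) (s ` {..<k})"
  shows "macaulay_basis vscale G' (Syz smult n m) ((\<lambda>j. s j - h j) ` {..<k})"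
proof -
  interpret N: module smult by (rule N_module)
  have Vm: "module vscale"
    by unfold_locales (auto simp: vscale_def algebra_simps)
  interpret V: module vscale by (rule Vm)
  define BG where "BG = assoc_grading GR act (\<lambda>i. hdeg GN (m i)) n"
  define C' :: "(nat \<Rightarrow> 'r) set" where "C' = free_carrier n"
  have refBG: "\<forall>b. BG b = {x \<in> C'. \<forall>b'. hcomp G' b' x \<noteq> 0 \<longrightarrow> g b' = b}"
    using g_refines unfolding BG_def C'_def by blast
  have G'g: "is_grading C' G'" using G'_grading unfolding C'_def .
  have BGg: "is_grading C' BG" by (rule refine_grading[OF G'g refBG])
  have Rfact: "hcomp G' b' x = hcomp G' b' (hcomp BG (g b') x)" if "x \<in> C'" for x b'
    by (rule refine_comp[OF G'g refBG gr_decomp[OF BGg that]])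
  have BGC: "x \<in> BG b \<Longrightarrow> x \<in> C'" for x b using refBG by auto
  have m_nz: "m i \<noteq> 0" if "i < n" for i using X_mac that unfolding macaulay_basis_def by auto
  define d where "d i = hdeg GN (m i)" for i
  have lf_in: "lf GN (m i) \<in> GN (d i)" for i
    unfolding lf_def d_def using gr_hcomp_in[OF N_grading] by auto
  have strict: "act a x < act a y" if "x < y" for a x y
  proof -
    have "act a x \<le> act a y" using act_mono2 that by simp
    moreover have "act a x \<noteq> act a y" using act_canc2 that by fastforce
    ultimately show ?thesis by simp
  qed
  have low: "\<forall>c. hcomp GN c (m i - lf GN (m i)) \<noteq> 0 \<longrightarrow> c < d i" if i: "i < n" for i
  proof (intro allI impI)
    fix c assume ne: "hcomp GN c (m i - lf GN (m i)) \<noteq> 0"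
    have eq: "hcomp GN c (m i - lf GN (m i)) = hcomp GN c (m i) - (if c = d i then lf GN (m i) else 0)"
      using gr_diff(2)[OF N_grading, of "m i" "lf GN (m i)" c] gr_homog[OF N_grading lf_in[of i], of c] by simp
    show "c < d i"
    proof (cases "c = d i")
      case True then show ?thesis using ne eq unfolding lf_def d_def by simp
    next
      case False
      then have "hcomp GN c (m i) \<noteq> 0" using ne eq by simp
      then have "c \<le> d i" using gr_hdeg(2)[OF N_grading _ m_nz[OF i]] unfolding d_def by auto
      then show ?thesis using False by simp
    qed
  qed
  have KEY: "(\<Sum>i<n. smult (x i) (lf GN (m i))) \<in> GN b \<and>
     (\<forall>c. hcomp GN c ((\<Sum>i<n. smult (x i) (m i)) - (\<Sum>i<n. smult (x i) (lf GN (m i)))) \<noteq> 0 \<longrightarrow> c < b)"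
    if x: "x \<in> BG b" for x b
  proof
    have xi: "x i = 0 \<or> (\<exists>a. act a (d i) = b \<and> x i \<in> GR a)" if "i < n" for i
      using x that unfolding BG_def assoc_grading_def d_def by auto
    show "(\<Sum>i<n. smult (x i) (lf GN (m i))) \<in> GN b"
    proof (rule gr_closed_sum[OF N_grading], intro ballI)
      fix i assume "i \<in> {..<n}"
      then show "smult (x i) (lf GN (m i)) \<in> GN b"
        using xi[of i] N_mult lf_in gr_closed(1)[OF N_grading] by auto
    qed
    have eqT: "(\<Sum>i<n. smult (x i) (m i)) - (\<Sum>i<n. smult (x i) (lf GN (m i))) = (\<Sum>i<n. smult (x i) (m i - lf GN (m i)))"
      by (simp add: sum_subtractf N.scale_right_diff_distrib)
    have all: "\<forall>i\<in>{..<n}. \<forall>c. hcomp GN c (smult (x i) (m i - lf GN (m i))) \<noteq> 0 \<longrightarrow> c < b"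
    proof
      fix i assume "i \<in> {..<n}"
      then have i: "i < n" by simp
      show "\<forall>c. hcomp GN c (smult (x i) (m i - lf GN (m i))) \<noteq> 0 \<longrightarrow> c < b"
      proof (cases "x i = 0")
        case True then show ?thesis using gr_zero(2)[OF N_grading] by simp
      next
        case False
        then obtain a where a: "act a (d i) = b" "x i \<in> GR a" using xi[OF i] by auto
        show ?thesis using smult_LT[OF N_grading N_mult N_module act_mono2 act_canc2 a(2) low[OF i]] a(1) by simp
      qed
    qed
    show "\<forall>c. hcomp GN c ((\<Sum>i<n. smult (x i) (m i)) - (\<Sum>i<n. smult (x i) (lf GN (m i)))) \<noteq> 0 \<longrightarrow> c < b"
      unfolding eqT by (rule pred_sum[OF N_grading all])
  qed
  have s_C: "s j \<in> C'" and s_lfsyz: "(\<Sum>i<n. smult (s j i) (lf GN (m i))) = 0" if "j < k" for j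
    using s_syz that unfolding Syz_def C'_def by auto
  have s_nz: "s j \<noteq> 0" if "j < k" for j
    using s_mac that unfolding macaulay_basis_def by force
  have h_C: "h j \<in> C'" if "j < k" for j using h_carrier that C'_def by auto
  have jfacts: "s j - h j \<in> Syz smult n m \<and> s j - h j \<noteq> 0 \<and> lf G' (s j - h j) = lf G' (s j)"
    if j: "j < k" for j
  proof -
    obtain bj where sBG: "s j \<in> BG bj" using s_hom j unfolding homogeneous_def BG_def by auto
    define T where "T = (\<Sum>i<n. smult (s j i) (m i))"
    have LTT: "\<forall>c. hcomp GN c T \<noteq> 0 \<longrightarrow> c < bj"
      using KEY[OF sBG] s_lfsyz[OF j] unfolding T_def by simp
    have hBG: "hcomp BG b (h j) \<noteq> 0 \<Longrightarrow> b < bj" for b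
    proof -
      assume ne: "hcomp BG b (h j) \<noteq> 0"
      show "b < bj"
      proof (cases "T = 0")
        case True
        then have "h j = 0" using h_zero j T_def by auto
        then show ?thesis using ne gr_zero(2)[OF BGg] by simp
      next
        case False
        then have "b \<le> hdeg GN T" using h_deg j ne unfolding T_def BG_def by auto
        moreover have "hdeg GN T < bj" using LTT gr_hdeg(1)[OF N_grading _ False] by auto
        ultimately show ?thesis by simp
      qed
    qed
    have hG': "hcomp G' b' (h j) \<noteq> 0 \<Longrightarrow> g b' < bj" for b'
      using Rfact[OF h_C[OF j], of b'] hBG gr_zero(2)[OF G'g] by metis
    have sG': "hcomp G' b' (s j) \<noteq> 0 \<Longrightarrow> g b' = bj" for b' using sBG refBG by auto
    define dd where "dd = hdeg G' (s j)"
    have dd1: "hcomp G' dd (s j) \<noteq> 0" unfolding dd_def by (rule gr_hdeg(1)[OF G'g s_C[OF j] s_nz[OF j]])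
    have gdd: "g dd = bj" using sG'[OF dd1] .
    have hdd: "hcomp G' dd (h j) = 0" using hG'[of dd] gdd by auto
    have dcomp: "hcomp G' b' (s j - h j) = hcomp G' b' (s j) - hcomp G' b' (h j)" for b'
      by (rule gr_diff(2)[OF G'g s_C[OF j] h_C[OF j]])
    have sdC: "s j - h j \<in> C'" by (rule gr_diff(1)[OF G'g s_C[OF j] h_C[OF j]])
    have top: "hcomp G' dd (s j - h j) = hcomp G' dd (s j)" using dcomp hdd by simp
    have nz: "s j - h j \<noteq> 0" using top dd1 gr_zero(2)[OF G'g] by auto
    have "\<forall>b'. hcomp G' b' (s j - h j) \<noteq> 0 \<longrightarrow> b' \<le> dd"
    proof (intro allI impI)
      fix b' assume ne: "hcomp G' b' (s j - h j) \<noteq> 0"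
      show "b' \<le> dd"
      proof (cases "hcomp G' b' (s j) = 0")
        case False
        then show ?thesis unfolding dd_def by (rule gr_hdeg(2)[OF G'g s_C[OF j] s_nz[OF j]])
      next
        case True
        then have "hcomp G' b' (h j) \<noteq> 0" using ne dcomp by auto
        then have "g b' < g dd" using hG' gdd by auto
        then show ?thesis using g_mono by (metis le_cases monoD not_le)
      qed
    qed
    then have "hdeg G' (s j - h j) = dd" using gr_hdeg_eq[OF G'g sdC] top dd1 by auto
    then have lfeq: "lf G' (s j - h j) = lf G' (s j)" unfolding lf_def using top dd_def by simp
    have "(\<Sum>i<n. smult ((s j - h j) i) (m i)) = T - (\<Sum>i<n. smult (h j i) (m i))"
      unfolding T_def by (simp add: N.scale_left_diff_distrib sum_subtractf)
    also have "\<dots> = 0" using h_eq j T_def by simp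
    finally have "s j - h j \<in> Syz smult n m" using sdC unfolding Syz_def C'_def by simp
    then show ?thesis using nz lfeq by simp
  qed
  have pfact: "\<exists>q. q \<in> Syz smult n (\<lambda>i. lf GN (m i)) \<and> q \<noteq> 0 \<and> lf G' p = lf G' q"
    if pS: "p \<in> Syz smult n m" and pnz: "p \<noteq> 0" for p
  proof -
    have pC: "p \<in> C'" using pS unfolding Syz_def C'_def by auto
    have psum: "(\<Sum>i<n. smult (p i) (m i)) = 0" using pS unfolding Syz_def by auto
    define b where "b = hdeg BG p"
    define pc where "pc c = hcomp BG c p" for c
    define S where "S = {c. hcomp BG c p \<noteq> 0}"
    have finS: "finite S" unfolding S_def by (rule gr_supp_finite[OF BGg pC])
    have pb_nz: "pc b \<noteq> 0" unfolding pc_def b_def by (rule gr_hdeg(1)[OF BGg pC pnz])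
    have bS: "b \<in> S" using pb_nz unfolding S_def pc_def by auto
    have pcBG: "pc c \<in> BG c" for c unfolding pc_def by (rule gr_hcomp_in[OF BGg pC])
    have lt_b: "c \<in> S - {b} \<Longrightarrow> c < b" for c
      using gr_hdeg(2)[OF BGg pC pnz, of c] unfolding S_def b_def by auto
    have pexp: "p = (\<Sum>c\<in>S. pc c)" using gr_expand[OF BGg pC finS] S_def pc_def by auto
    define T where "T c = (\<Sum>i<n. smult (pc c i) (m i))" for c
    define Y where "Y c = (\<Sum>i<n. smult (pc c i) (lf GN (m i)))" for c
    have "(\<Sum>i<n. smult (p i) (m i)) = (\<Sum>i<n. \<Sum>c\<in>S. smult (pc c i) (m i))"
    proof (rule sum.cong)
      fix i
      have "p i = (\<Sum>c\<in>S. pc c i)" using pexp fun_sum_apply by metis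
      then show "smult (p i) (m i) = (\<Sum>c\<in>S. smult (pc c i) (m i))" by (simp add: N.scale_sum_left)
    qed simp
    also have "\<dots> = (\<Sum>c\<in>S. T c)" unfolding T_def by (rule sum.swap)
    also have "\<dots> = T b + (\<Sum>c\<in>S - {b}. T c)" using finS bS by (simp add: sum.remove)
    finally have zero: "0 = Y b + ((T b - Y b) + (\<Sum>c\<in>S - {b}. T c))" using psum by simp
    have KB: "Y b \<in> GN b" "\<forall>c'. hcomp GN c' (T b - Y b) \<noteq> 0 \<longrightarrow> c' < b"
      using KEY[OF pcBG[of b]] unfolding T_def Y_def by auto
    have rest: "\<forall>c\<in>S - {b}. \<forall>c'. hcomp GN c' (T c) \<noteq> 0 \<longrightarrow> c' < b"
    proof
      fix c assume cS: "c \<in> S - {b}"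
      have K: "Y c \<in> GN c" "\<forall>c'. hcomp GN c' (T c - Y c) \<noteq> 0 \<longrightarrow> c' < c"
        using KEY[OF pcBG[of c]] unfolding T_def Y_def by auto
      have 1: "\<forall>c'. hcomp GN c' (T c - Y c) \<noteq> 0 \<longrightarrow> c' < b" using K(2) lt_b[OF cS] by auto
      have 2: "\<forall>c'. hcomp GN c' (Y c) \<noteq> 0 \<longrightarrow> c' < b"
        using pred_homog[OF N_grading K(1), of "\<lambda>c'. c' < b"] lt_b[OF cS] by auto
      show "\<forall>c'. hcomp GN c' (T c) \<noteq> 0 \<longrightarrow> c' < b"
        using pred_add[OF N_grading 1 2] by simp
    qed
    define Wv where "Wv = (T b - Y b) + (\<Sum>c\<in>S - {b}. T c)"
    have W: "\<forall>c'. hcomp GN c' Wv \<noteq> 0 \<longrightarrow> c' < b"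
      unfolding Wv_def using pred_add[OF N_grading KB(2) pred_sum[OF N_grading rest]] .
    have zero': "Y b + Wv = 0" using zero unfolding Wv_def by simp
    have "hcomp GN b (Y b + Wv) = hcomp GN b (Y b) + hcomp GN b Wv"
      by (rule gr_add(2)[OF N_grading UNIV_I UNIV_I])
    then have "0 = hcomp GN b (Y b) + hcomp GN b Wv"
      unfolding zero' gr_zero(2)[OF N_grading] .
    moreover have "hcomp GN b Wv = 0" using W by auto
    ultimately have Yb0: "Y b = 0" using gr_homog[OF N_grading KB(1), of b] by simp
    have pbSyz: "pc b \<in> Syz smult n (\<lambda>i. lf GN (m i))"
      using BGC[OF pcBG[of b]] Yb0 unfolding Syz_def C'_def Y_def by simp
    define dd where "dd = hdeg G' (pc b)"
    have pbC: "pc b \<in> C'" using BGC[OF pcBG[of b]] .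
    have dd1: "hcomp G' dd (pc b) \<noteq> 0" unfolding dd_def by (rule gr_hdeg(1)[OF G'g pbC pb_nz])
    have gdd: "g dd = b" using dd1 pcBG[of b] refBG by auto
    have top: "hcomp G' dd p = hcomp G' dd (pc b)" using Rfact[OF pC, of dd] gdd pc_def by simp
    have "\<forall>b'. hcomp G' b' p \<noteq> 0 \<longrightarrow> b' \<le> dd"
    proof (intro allI impI)
      fix b' assume ne: "hcomp G' b' p \<noteq> 0"
      have e: "hcomp G' b' p = hcomp G' b' (pc (g b'))" using Rfact[OF pC, of b'] pc_def by simp
      then have "pc (g b') \<noteq> 0" using ne gr_zero(2)[OF G'g] by auto
      then have gle: "g b' \<le> b" using gr_hdeg(2)[OF BGg pC pnz] unfolding pc_def b_def by auto
      show "b' \<le> dd"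
      proof (cases "g b' = b")
        case True
        then have "hcomp G' b' (pc b) \<noteq> 0" using e ne by simp
        then show ?thesis unfolding dd_def by (rule gr_hdeg(2)[OF G'g pbC pb_nz])
      next
        case False
        then have "g b' < g dd" using gle gdd by simp
        then show ?thesis using g_mono by (metis le_cases monoD not_le)
      qed
    qed
    then have "hdeg G' p = dd" using gr_hdeg_eq[OF G'g pC] top dd1 by auto
    then have "lf G' p = lf G' (pc b)" unfolding lf_def using top dd_def by simp
    then show ?thesis using pbSyz pb_nz by blast
  qed
  let ?X = "(\<lambda>j. s j - h j) ` {..<k}"
  have imeq: "lf G' ` ?X = lf G' ` s ` {..<k}"
    using jfacts by (force simp: image_iff)
  have sp: "V.span {lf G' p |p. p \<in> Syz smult n (\<lambda>i. lf GN (m i)) \<and> p \<noteq> 0} = V.span (lf G' ` s ` {..<k})"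
    using s_mac unfolding macaulay_basis_def by blast
  have sub1: "lf G' ` ?X \<subseteq> {lf G' p |p. p \<in> Syz smult n m \<and> p \<noteq> 0}"
    using jfacts by force
  have sub2: "{lf G' p |p. p \<in> Syz smult n m \<and> p \<noteq> 0} \<subseteq> V.span (lf G' ` ?X)"
  proof
    fix y assume "y \<in> {lf G' p |p. p \<in> Syz smult n m \<and> p \<noteq> 0}"
    then obtain p where p1: "p \<in> Syz smult n m" and p2: "p \<noteq> 0" and p3: "y = lf G' p" by blast
    obtain q where "q \<in> Syz smult n (\<lambda>i. lf GN (m i))" "q \<noteq> 0" "y = lf G' q"
      using pfact[OF p1 p2] p3 by auto
    then have "y \<in> {lf G' p |p. p \<in> Syz smult n (\<lambda>i. lf GN (m i)) \<and> p \<noteq> 0}"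
      by blast
    then have "y \<in> V.span {lf G' p |p. p \<in> Syz smult n (\<lambda>i. lf GN (m i)) \<and> p \<noteq> 0}"
      by (rule subsetD[OF V.span_superset])
    then show "y \<in> V.span (lf G' ` ?X)" using sp imeq by simp
  qed
  have "V.span {lf G' p |p. p \<in> Syz smult n m \<and> p \<noteq> 0} = V.span (lf G' ` ?X)"
  proof -
    have "lf G' ` ?X \<subseteq> V.span {lf G' p |p. p \<in> Syz smult n m \<and> p \<noteq> 0}"
      using sub1 V.span_superset by (rule order_trans)
    then show ?thesis by (rule V.span_eq[THEN iffD2, OF conjI[OF sub2]])
  qed
  moreover have "?X \<subseteq> Syz smult n m" using jfacts by blast
  moreover have "0 \<notin> ?X" using jfacts by (metis (no_types, lifting) imageE lessThan_iff)
  moreover have "finite ?X" by simp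
  ultimately show ?thesis unfolding macaulay_basis_def by (intro conjI)
qed

end
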